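(* Let $b\in L^1_{\mathrm{loc}}(\mathbb{R}^n)$. Suppose there is a constant $C_b$ such that every $h^1$ atom $a$ satisfies $$\Big|\int ab\Big|\le\min\Big\{C_b,\ \frac{C_b\log 2}{\log(1+r^{-1})}\Big\},$$ where $r$ is the radius of the ball containing the support of $a$. Then $b\in\mathrm{lmo}(\mathbb{R}^n)$, with $\|b\|_{\mathrm{lmo}}\lesssim C_b$.
   Context: An $h^1$ atom: a function $a$ supported in a ball $B(x_0,r)$ with $\|a\|_{L^2}\le|B(x_0,r)|^{-1/2}$ and $|\int a|\le[\log(1+r^{-1})]^{-1}$. For a ball $B$, $b_B=\frac1{|B|}\int_Bb$. $\mathrm{LMO}_{\mathrm{loc}}$: $b\in L^1_{\mathrm{loc}}$ with $\|b\|_{\mathrm{LMO}_{\mathrm{loc}}}:=\sup_{r(B)<1}\frac{\log(1+r(B)^{-1})}{|B|}\int_B|b-b_B|<\infty$. $\mathrm{lmo}(\mathbb{R}^n)$ is the set of $b$ with $\|b\|_{\mathrm{lmo}}:=\|b\|_{\mathrm{LMO}_{\mathrm{loc}}}+\sup_{r(B)\ge1}\frac1{|B|}\int_B|b|<\infty$ (this equals $\mathrm{LMO}_{\mathrm{loc}}\cap\mathrm{bmo}$). *)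

theory Defs
  imports "HOL-Analysis.Analysis"
begin

definition locally_integrable :: "('a::euclidean_space \<Rightarrow> real) \<Rightarrow> bool" where
  "locally_integrable b \<longleftrightarrow> (\<forall>K. compact K \<longrightarrow> set_integrable lebesgue K b)"

definition avg :: "('a::euclidean_space \<Rightarrow> real) \<Rightarrow> 'a set \<Rightarrow> real" where
  "avg b B = (LINT y:B|lebesgue. b y) / measure lebesgue B"

definition h1_atom :: "('a::euclidean_space \<Rightarrow> real) \<Rightarrow> 'a \<Rightarrow> real \<Rightarrow> bool" where
  "h1_atom a x0 r \<longleftrightarrow> 0 < r \<and> a \<in> borel_measurable lebesgue
     \<and> (\<forall>y. y \<notin> ball x0 r \<longrightarrow> a y = 0)
     \<and> integrable lebesgue (\<lambda>y. (a y)\<^sup>2)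
     \<and> sqrt (LINT y|lebesgue. (a y)\<^sup>2) \<le> measure lebesgue (ball x0 r) powr (-1/2)
     \<and> \<bar>LINT y|lebesgue. a y\<bar> \<le> 1 / ln (1 + 1 / r)"

definition LMO_loc_norm :: "('a::euclidean_space \<Rightarrow> real) \<Rightarrow> ereal" where
  "LMO_loc_norm b = (SUP xr \<in> {(x, r). 0 < r \<and> r < (1::real)}.
      ereal (ln (1 + 1 / snd xr) / measure lebesgue (ball (fst xr) (snd xr))
        * (LINT y:ball (fst xr) (snd xr)|lebesgue. \<bar>b y - avg b (ball (fst xr) (snd xr))\<bar>)))"

definition lmo_norm :: "('a::euclidean_space \<Rightarrow> real) \<Rightarrow> ereal" where
  "lmo_norm b = LMO_loc_norm b + (SUP xr \<in> {(x, r). (1::real) \<le> r}.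
      ereal ((LINT y:ball (fst xr) (snd xr)|lebesgue. \<bar>b y\<bar>) / measure lebesgue (ball (fst xr) (snd xr))))"

definition in_lmo :: "('a::euclidean_space \<Rightarrow> real) \<Rightarrow> bool" where
  "in_lmo b \<longleftrightarrow> locally_integrable b \<and> lmo_norm b < \<infinity>"

end

theory Submission imports Defs begin

lemma mB_pos: "0<r \<Longrightarrow> 0 < measure lebesgue (ball (x::'a::euclidean_space) r)"
  using content_ball_pos[of r x] by simp

lemma ball_finite: "emeasure lebesgue (ball (x::'a::euclidean_space) r) < \<infinity>"
  using lmeasurable_ball[of x r] by (simp add: fmeasurable_def)

lemma int_ind_ball: "integrable lebesgue (indicat_real (ball (x::'a::euclidean_space) r))"
  using lmeasurable_iff_integrable lmeasurable_ball by blast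

lemma atom_lemma:
  fixes f :: "'a::euclidean_space \<Rightarrow> real"
  assumes r: "0<r" and fm: "f \<in> borel_measurable lebesgue"
   and vanish: "\<And>y. y \<notin> ball x r \<Longrightarrow> f y = 0"
   and bnd: "\<And>y. \<bar>f y\<bar> \<le> 1 / measure lebesgue (ball x r)"
  shows "integrable lebesgue f" "\<bar>integral\<^sup>L lebesgue f\<bar> \<le> 1"
   "integrable lebesgue (\<lambda>y. (f y)^2)"
   "sqrt (LINT y|lebesgue. (f y)^2) \<le> measure lebesgue (ball x r) powr (-1/2)"
proof -
  define mB where "mB = measure lebesgue (ball x r)"
  have mB: "0 < mB" using mB_pos[OF r] mB_def by simp
  have pb: "\<bar>f y\<bar> \<le> indicator (ball x r) y / mB" for y
    using vanish[of y] bnd[of y] by (cases "y \<in> ball x r") (auto simp: mB_def)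
  have pb2: "(f y)^2 \<le> indicator (ball x r) y / mB^2" for y
  proof (cases "y \<in> ball x r")
    case True
    have "\<bar>f y\<bar> \<le> 1/mB" using pb[of y] True by simp
    then have "\<bar>f y\<bar>^2 \<le> (1/mB)^2" by (intro power_mono) auto
    then show ?thesis using True by (simp add: power_divide)
  next
    case False then show ?thesis using vanish[of y] by simp
  qed
  have ii: "integrable lebesgue (\<lambda>y. indicator (ball x r) y / mB)"
    using int_ind_ball by (intro integrable_divide_zero) 
  have ii2: "integrable lebesgue (\<lambda>y. indicator (ball x r) y / mB^2)"
    using int_ind_ball by (intro integrable_divide_zero) 
  have ibint: "integral\<^sup>L lebesgue (indicat_real (ball x r)) = mB"
    using lmeasurable_ball by (simp add: mB_def)
  show fi: "integrable lebesgue f"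
    by (rule Bochner_Integration.integrable_bound[OF ii fm]) (use pb mB in \<open>auto simp: abs_le_iff\<close>)
  have "\<bar>integral\<^sup>L lebesgue f\<bar> \<le> integral\<^sup>L lebesgue (\<lambda>y. indicator (ball x r) y / mB)"
    using pb by (intro integral_abs_bound_integral fi ii) auto
  also have "\<dots> = 1" using ibint mB by simp
  finally show "\<bar>integral\<^sup>L lebesgue f\<bar> \<le> 1" .
  show f2i: "integrable lebesgue (\<lambda>y. (f y)^2)"
    by (rule Bochner_Integration.integrable_bound[OF ii2]) (use pb2 fm in \<open>auto\<close>)
  have "(LINT y|lebesgue. (f y)^2) \<le> integral\<^sup>L lebesgue (\<lambda>y. indicator (ball x r) y / mB^2)"
    using pb2 by (intro integral_mono f2i ii2) auto
  also have "\<dots> = 1/mB" using ibint mB by (simp add: power2_eq_square)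
  finally have "sqrt (LINT y|lebesgue. (f y)^2) \<le> sqrt (1/mB)" by simp
  also have "sqrt (1/mB) = mB powr (-1/2)"
    using mB by (simp add: powr_minus_divide powr_half_sqrt[symmetric] real_sqrt_divide powr_divide)
  finally show "sqrt (LINT y|lebesgue. (f y)^2) \<le> measure lebesgue (ball x r) powr (-1/2)"
    by (simp add: mB_def)
qed

lemma ib_int:
  assumes "locally_integrable (b::'a::euclidean_space \<Rightarrow> real)"
  shows "integrable lebesgue (\<lambda>y. indicator (ball x r) y * b y)"
proof -
  have "set_integrable lebesgue (cball x r) b"
    using assms compact_cball unfolding locally_integrable_def by blast
  then have "set_integrable lebesgue (ball x r) b"
    by (rule set_integrable_subset) (auto intro: fmeasurableD[OF lmeasurable_ball])
  then show ?thesis by (simp add: set_integrable_def)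
qed

lemma fb_int:
  fixes f b :: "'a::euclidean_space \<Rightarrow> real"
  assumes lb: "locally_integrable b" and fm: "f \<in> borel_measurable lebesgue"
   and vanish: "\<And>y. y \<notin> ball x r \<Longrightarrow> f y = 0"
   and bnd: "\<And>y. \<bar>f y\<bar> \<le> K"
  shows "integrable lebesgue (\<lambda>y. f y * b y)"
proof -
  note ii = ib_int[OF lb, of x r]
  have eq: "(\<lambda>y. f y * b y) = (\<lambda>y. f y * (indicator (ball x r) y * b y))"
    using vanish by (auto simp: indicator_def fun_eq_iff)
  have "integrable lebesgue (\<lambda>y. K * (indicator (ball x r) y * b y))"
    using ii by simp
  show ?thesis unfolding eq
  proof (rule Bochner_Integration.integrable_bound[OF _ _ ])
    show "integrable lebesgue (\<lambda>y. K * (indicator (ball x r) y * b y))" using ii by simp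
    show "(\<lambda>y. f y * (indicator (ball x r) y * b y)) \<in> borel_measurable lebesgue"
      using fm borel_measurable_integrable[OF ii] by measurable
    have "\<bar>f y * (indicator (ball x r) y * b y)\<bar> \<le> \<bar>K * (indicator (ball x r) y * b y)\<bar>" for y
      using bnd[of y] by (simp add: abs_mult mult_right_mono)
    then show "AE y in lebesgue. norm (f y * (indicator (ball x r) y * b y))
        \<le> norm (K * (indicator (ball x r) y * b y))" by simp
  qed
qed


definition HYP :: "('a::euclidean_space \<Rightarrow> real) \<Rightarrow> real \<Rightarrow> bool" where
  "HYP b Cb \<longleftrightarrow> (\<forall>a x0 r. h1_atom a x0 r \<longrightarrow> integrable lebesgue (\<lambda>y. a y * b y) \<longrightarrow>
            \<bar>LINT y|lebesgue. a y * b y\<bar> \<le> min Cb (Cb * ln 2 / ln (1 + 1 / r)))"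

lemma Cb_nonneg:
  assumes "HYP (b::'a::euclidean_space \<Rightarrow> real) Cb" shows "0 \<le> Cb"
proof -
  have "h1_atom (\<lambda>_::'a. 0::real) 0 1"
    unfolding h1_atom_def by (auto simp: ln_2_less_1)
  then have "\<bar>LINT y|lebesgue. (\<lambda>_::'a. 0::real) y * b y\<bar> \<le> min Cb (Cb * ln 2 / ln (1 + 1 / 1))"
    using assms unfolding HYP_def by blast
  then show ?thesis by simp
qed

lemma big_ball:
  fixes b :: "'a::euclidean_space \<Rightarrow> real"
  assumes lb: "locally_integrable b" and H: "HYP b Cb" and r: "1 \<le> r"
  shows "(LINT y:ball x r|lebesgue. \<bar>b y\<bar>) / measure lebesgue (ball x r) \<le> Cb"
proof -
  define mB where "mB = measure lebesgue (ball x r)"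
  have r0: "0 < r" using r by simp
  have mB: "0 < mB" using mB_pos[OF r0] mB_def by simp
  define ib where "ib y = indicator (ball x r) y * b y" for y
  have ibi: "integrable lebesgue ib" using ib_int[OF lb] unfolding ib_def .
  define f where "f y = indicator (ball x r) y * sgn (ib y) / mB" for y
  have fm: "f \<in> borel_measurable lebesgue"
  proof -
    have im: "indicat_real (ball x r) \<in> borel_measurable lebesgue"
      using borel_measurable_integrable[OF int_ind_ball] .
    have sm: "(\<lambda>y. sgn (ib y)) \<in> borel_measurable lebesgue"
      using measurable_compose[OF borel_measurable_integrable[OF ibi] borel_measurable_sgn] .
    show ?thesis unfolding f_def
      by (intro borel_measurable_divide borel_measurable_times im sm) auto
  qed
  have van: "\<And>y. y \<notin> ball x r \<Longrightarrow> f y = 0" by (simp add: f_def)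
  have bnd: "\<bar>f y\<bar> \<le> 1 / measure lebesgue (ball x r)" for y
    using mB by (auto simp: f_def mB_def indicator_def abs_sgn sgn_real_def)
  note A = atom_lemma[OF r0 fm van bnd]
  have l0: "0 < ln (1 + 1 / r)" using r0 by (intro ln_gt_zero) simp
  have l1: "ln (1 + 1 / r) \<le> ln 2" using r0 r by (subst ln_le_cancel_iff) (auto simp: field_simps)
  have l2: "1 \<le> 1 / ln (1 + 1 / r)" using l0 l1 ln_2_less_1 by (simp add: field_simps)
  have atom: "h1_atom f x r"
    unfolding h1_atom_def using A r0 fm van l2 by auto
  have fbi: "integrable lebesgue (\<lambda>y. f y * b y)"
    by (rule fb_int[OF lb fm van, where K="1/mB"]) (use bnd mB_def in auto)
  have Hb: "\<bar>LINT y|lebesgue. f y * b y\<bar> \<le> Cb"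
    using H atom fbi unfolding HYP_def by fastforce
  have pw: "f y * b y = indicator (ball x r) y * \<bar>b y\<bar> / mB" for y
    by (auto simp: f_def ib_def indicator_def sgn_real_def)
  have "(LINT y|lebesgue. f y * b y) = (LINT y:ball x r|lebesgue. \<bar>b y\<bar>) / mB"
    unfolding pw set_lebesgue_integral_def by simp
  then have "(LINT y:ball x r|lebesgue. \<bar>b y\<bar>) / mB \<le> Cb" using Hb by (metis abs_ge_self order_trans)
  then show ?thesis by (simp add: mB_def)
qed


lemma small_ball:
  fixes b :: "'a::euclidean_space \<Rightarrow> real"
  assumes lb: "locally_integrable b" and H: "HYP b Cb" and r0: "0 < r"
  shows "ln (1 + 1 / r) / measure lebesgue (ball x r)
        * (LINT y:ball x r|lebesgue. \<bar>b y - avg b (ball x r)\<bar>) \<le> 2 * ln 2 * Cb"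
proof -
  define mB where "mB = measure lebesgue (ball x r)"
  have mB: "0 < mB" using mB_pos[OF r0] mB_def by simp
  define ib where "ib y = indicator (ball x r) y * b y" for y
  have ibi: "integrable lebesgue ib" using ib_int[OF lb] unfolding ib_def .
  define c where "c = avg b (ball x r)"
  have c: "c * mB = integral\<^sup>L lebesgue ib"
    using mB by (simp add: c_def avg_def mB_def ib_def[abs_def] set_lebesgue_integral_def)
  define g where "g y = sgn (ib y - c)" for y
  have im: "indicat_real (ball x r) \<in> borel_measurable lebesgue"
    using borel_measurable_integrable[OF int_ind_ball] .
  have gm: "g \<in> borel_measurable lebesgue"
  proof -
    have "(\<lambda>y. ib y - c) \<in> borel_measurable lebesgue"
      using borel_measurable_integrable[OF ibi] by measurable
    from measurable_compose[OF this borel_measurable_sgn] show ?thesis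
      unfolding g_def .
  qed
  have gb: "\<bar>g y\<bar> \<le> 1" for y by (auto simp: g_def sgn_real_def)
  have gii: "integrable lebesgue (\<lambda>y. g y * indicator (ball x r) y)"
  proof (rule Bochner_Integration.integrable_bound[OF int_ind_ball])
    show "(\<lambda>y. g y * indicat_real (ball x r) y) \<in> borel_measurable lebesgue"
      by (intro borel_measurable_times gm im)
    show "AE y in lebesgue. norm (g y * indicat_real (ball x r) y) \<le> norm (indicat_real (ball x r) y)"
      using gb by (auto simp: abs_mult indicator_def)
  qed
  have gibi: "integrable lebesgue (\<lambda>y. g y * ib y)"
  proof (rule Bochner_Integration.integrable_bound[OF ibi])
    show "(\<lambda>y. g y * ib y) \<in> borel_measurable lebesgue"
      by (intro borel_measurable_times gm borel_measurable_integrable[OF ibi])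
    show "AE y in lebesgue. norm (g y * ib y) \<le> norm (ib y)"
    proof (intro AE_I2)
      fix y show "norm (g y * ib y) \<le> norm (ib y)"
        using gb[of y] by (simp add: abs_mult mult_left_le_one_le)
    qed
  qed
  have ibint: "integral\<^sup>L lebesgue (indicat_real (ball x r)) = mB"
    using lmeasurable_ball by (simp add: mB_def)
  define m where "m = integral\<^sup>L lebesgue (\<lambda>y. g y * indicator (ball x r) y) / mB"
  have mm: "m * mB = integral\<^sup>L lebesgue (\<lambda>y. g y * indicator (ball x r) y)"
    using mB by (simp add: m_def)
  have "\<bar>integral\<^sup>L lebesgue (\<lambda>y. g y * indicator (ball x r) y)\<bar> \<le> integral\<^sup>L lebesgue (indicat_real (ball x r))"
    using gb by (intro integral_abs_bound_integral gii int_ind_ball) (auto simp: abs_mult indicator_def)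
  then have I: "\<bar>integral\<^sup>L lebesgue (\<lambda>y. g y * indicator (ball x r) y)\<bar> \<le> mB"
    using ibint by simp
  have "\<bar>m\<bar> = \<bar>integral\<^sup>L lebesgue (\<lambda>y. g y * indicator (ball x r) y)\<bar> / mB"
    unfolding m_def using mB by (simp add: abs_divide)
  also have "\<dots> \<le> 1" using I mB by (simp add: divide_le_eq)
  finally have mb: "\<bar>m\<bar> \<le> 1" .
  define f where "f y = indicator (ball x r) y * (g y - m) / (2 * mB)" for y
  have fm: "f \<in> borel_measurable lebesgue"
    unfolding f_def by (intro borel_measurable_divide borel_measurable_times borel_measurable_diff im gm) auto
  have van: "\<And>y. y \<notin> ball x r \<Longrightarrow> f y = 0" by (simp add: f_def)
  have bnd: "\<bar>f y\<bar> \<le> 1 / measure lebesgue (ball x r)" for y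
  proof -
    have gm2: "\<bar>g y - m\<bar> \<le> 2" using gb[of y] mb by linarith
    show ?thesis
    proof (cases "y \<in> ball x r")
      case True
      then have "\<bar>f y\<bar> = \<bar>g y - m\<bar> / (2 * mB)" using mB by (simp add: f_def abs_mult)
      also have "\<dots> \<le> 2 / (2 * mB)" using gm2 mB by (intro divide_right_mono) auto
      finally show ?thesis using mB by (simp add: mB_def)
    next
      case False then show ?thesis using mB by (simp add: f_def mB_def)
    qed
  qed
  note A = atom_lemma[OF r0 fm van bnd]
  have l0: "0 < ln (1 + 1 / r)" using r0 by (intro ln_gt_zero) simp
  have fpw: "f y = (g y * indicator (ball x r) y - m * indicator (ball x r) y) / (2 * mB)" for y
    by (cases "y \<in> ball x r") (simp_all add: f_def)
  have f0: "integral\<^sup>L lebesgue f = 0"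
  proof -
    have "integral\<^sup>L lebesgue f = (integral\<^sup>L lebesgue (\<lambda>y. g y * indicator (ball x r) y)
       - m * integral\<^sup>L lebesgue (indicat_real (ball x r))) / (2 * mB)"
    proof -
      have "integral\<^sup>L lebesgue (\<lambda>y. g y * indicator (ball x r) y - m * indicator (ball x r) y)
        = integral\<^sup>L lebesgue (\<lambda>y. g y * indicator (ball x r) y) - integral\<^sup>L lebesgue (\<lambda>y. m * indicator (ball x r) y)"
        by (rule Bochner_Integration.integral_diff) (use gii int_ind_ball in auto)
      then show ?thesis unfolding fpw by simp
    qed
    then show ?thesis using mm ibint by simp
  qed
  have atom: "h1_atom f x r"
    unfolding h1_atom_def using A r0 fm van l0 f0 by auto
  have fbi: "integrable lebesgue (\<lambda>y. f y * b y)"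
    by (rule fb_int[OF lb fm van, where K="1/mB"]) (use bnd mB_def in auto)
  have Hb: "\<bar>LINT y|lebesgue. f y * b y\<bar> \<le> Cb * ln 2 / ln (1 + 1 / r)"
    using H atom fbi unfolding HYP_def by fastforce
  have pw: "f y * b y = (g y * ib y - m * ib y) / (2 * mB)" for y
  proof -
    have e: "indicator (ball x r) y * (g y - m) * b y = g y * ib y - m * ib y"
      by (simp add: ib_def algebra_simps)
    have "f y * b y = indicator (ball x r) y * (g y - m) * b y / (2 * mB)"
      by (simp add: f_def)
    then show ?thesis by (simp only: e)
  qed
  have I1: "(LINT y|lebesgue. f y * b y) = (integral\<^sup>L lebesgue (\<lambda>y. g y * ib y) - m * integral\<^sup>L lebesgue ib) / (2 * mB)"
    unfolding pw using gibi ibi by simp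
  define S where "S = (LINT y:ball x r|lebesgue. \<bar>b y - c\<bar>)"
  have pw2: "indicator (ball x r) y * \<bar>b y - c\<bar> = g y * ib y - c * (g y * indicator (ball x r) y)" for y
    by (auto simp: g_def ib_def indicator_def sgn_real_def)
  have S: "S = integral\<^sup>L lebesgue (\<lambda>y. g y * ib y) - c * (m * mB)"
    unfolding S_def set_lebesgue_integral_def mm using pw2 gibi gii by simp
  have S0: "0 \<le> S" unfolding S_def set_lebesgue_integral_def by (rule Bochner_Integration.integral_nonneg) (simp add: indicator_def)
  have I2: "(LINT y|lebesgue. f y * b y) = S / (2 * mB)"
    unfolding I1 S c[symmetric] by (simp add: algebra_simps)
  have "S / (2 * mB) \<le> Cb * ln 2 / ln (1 + 1 / r)"
    using Hb I2 S0 mB by simp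
  then have "ln (1 + 1 / r) * (S / (2 * mB)) \<le> Cb * ln 2"
    using l0 by (simp add: field_simps)
  then have "ln (1 + 1 / r) / mB * S \<le> 2 * ln 2 * Cb"
    using mB by (simp add: field_simps)
  then show ?thesis by (simp add: S_def c_def mB_def)
qed


theorem mainTheorem10:
  "\<exists>C::real. 0 < C \<and>
     (\<forall>(b::'a::euclidean_space \<Rightarrow> real) (Cb::real).
        locally_integrable b \<longrightarrow>
        (\<forall>a x0 r. h1_atom a x0 r \<longrightarrow> integrable lebesgue (\<lambda>y. a y * b y) \<longrightarrow>
            \<bar>LINT y|lebesgue. a y * b y\<bar> \<le> min Cb (Cb * ln 2 / ln (1 + 1 / r))) \<longrightarrow>
        in_lmo b \<and> lmo_norm b \<le> ereal (C * Cb))"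
proof (intro exI[of _ 3] conjI allI impI)
  show "(0::real) < 3" by simp
  fix b :: "'a \<Rightarrow> real" and Cb :: real
  assume lb: "locally_integrable b"
  assume H0: "\<forall>a x0 r. h1_atom a x0 r \<longrightarrow> integrable lebesgue (\<lambda>y. a y * b y) \<longrightarrow>
            \<bar>LINT y|lebesgue. a y * b y\<bar> \<le> min Cb (Cb * ln 2 / ln (1 + 1 / r))"
  then have H: "HYP b Cb" unfolding HYP_def by blast
  have C0: "0 \<le> Cb" by (rule Cb_nonneg[OF H])
  have L: "LMO_loc_norm b \<le> ereal (2 * ln 2 * Cb)"
    unfolding LMO_loc_norm_def
  proof (rule SUP_least)
    fix xr :: "'a \<times> real" assume "xr \<in> {(x, r). 0 < r \<and> r < 1}"
    then have "0 < snd xr" by auto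
    from small_ball[OF lb H this, of "fst xr"]
    show "ereal (ln (1 + 1 / snd xr) / measure lebesgue (ball (fst xr) (snd xr)) *
           (LINT y:ball (fst xr) (snd xr)|lebesgue. \<bar>b y - avg b (ball (fst xr) (snd xr))\<bar>))
          \<le> ereal (2 * ln 2 * Cb)" by simp
  qed
  have G: "(SUP xr \<in> {(x, r). (1::real) \<le> r}.
      ereal ((LINT y:ball (fst xr) (snd xr)|lebesgue. \<bar>b y\<bar>) / measure lebesgue (ball (fst xr) (snd xr))))
      \<le> ereal Cb"
  proof (rule SUP_least)
    fix xr :: "'a \<times> real" assume "xr \<in> {(x, r). 1 \<le> r}"
    then have "1 \<le> snd xr" by auto
    from big_ball[OF lb H this, of "fst xr"]
    show "ereal ((LINT y:ball (fst xr) (snd xr)|lebesgue. \<bar>b y\<bar>) / measure lebesgue (ball (fst xr) (snd xr)))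
          \<le> ereal Cb" by simp
  qed
  have "lmo_norm b \<le> ereal (2 * ln 2 * Cb) + ereal Cb"
    unfolding lmo_norm_def by (rule add_mono[OF L G])
  also have "\<dots> = ereal (2 * ln 2 * Cb + Cb)" by simp
  also have "\<dots> \<le> ereal (3 * Cb)"
    using C0 ln_2_less_1 by (simp add: mult_right_mono)
  finally have N: "lmo_norm b \<le> ereal (3 * Cb)" .
  then have "lmo_norm b < \<infinity>" using order.strict_trans1 by fastforce
  then show "in_lmo b" using lb unfolding in_lmo_def by blast
  show "lmo_norm b \<le> ereal (3 * Cb)" by (rule N)
qed

end
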